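(* Let $(X,\delta,c)$ be an accepting automaton over $\Sigma$ and let $\mu\mathrm{PL}(\delta,c)$ be as in the context. Then $\mu\mathrm{PL}(\delta,c)$ is isomorphic to the smallest preformation of languages containing $\{L(x,c)\mid x\in X\}$, where $L(x,c)=\{u\in\Sigma^\ast\mid\delta(x)(u)\in c\}$; that is, the set $\{L(\mathcal{U})\mid\mathcal{U}\in P(\Sigma^\ast/{\approx})\}$ is the smallest preformation of languages containing all $L(x,c)$, $x\in X$.
   Context: $\Sigma$ is a finite alphabet, $\Sigma^\ast$ the free monoid with empty word $\epsilon$, $u^r$ the reversal of $u$. An accepting automaton is $(X,\delta,c)$ with $\delta:X\to X^\Sigma$ (extended to words by $\delta(x)(\epsilon)=x$, $\delta(x)(wa)=\delta(\delta(x)(w))(a)$) and $c\subseteq X$. Define $\widehat{\delta}(U)(a)=\{x\mid\delta(x)(a)\in U\}$ for $U\subseteq X$, extended to words, so $\widehat{\delta}(U)(w)=\{x\mid\delta(x)(w^r)\in U\}$. Let $\langle c\rangle=\{\widehat{\delta}(c)(w)\mid w\in\Sigma^\ast\}$ and $u\approx v$ iff $\widehat{\delta}(U)(u)=\widehat{\delta}(U)(v)$ for all $U\in\langle c\rangle$. $\mu\mathrm{PL}(\delta,c)$ has state space $P(\Sigma^\ast/{\approx})$, transition $\widehat{\sigma}(\mathcal{U})(u)=\{[w]\mid[wu^r]\in\mathcal{U}\}$ and final states $\{\mathcal{U}\mid[\epsilon]\in\mathcal{U}\}$; $L(\mathcal{U})=\{u\mid[\epsilon]\in\widehat{\sigma}(\mathcal{U})(u)\}$.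 A preformation of languages is a complete atomic Boolean subalgebra of $2^{\Sigma^\ast}$ closed under left derivatives $U\mapsto\{w\mid aw\in U\}$ and right derivatives $U\mapsto\{w\mid wa\in U\}$, $a\in\Sigma$. *)

theory Defs
  imports Main
begin

text \<open>Words over the alphabet 'a are lists; \<open>rev\<close> is reversal.
 An accepting automaton is (delta, c) with delta :: 'x \<Rightarrow> 'a \<Rightarrow> 'x and c :: 'x set.\<close>

fun deltaw :: "('x \<Rightarrow> 'a \<Rightarrow> 'x) \<Rightarrow> 'x \<Rightarrow> 'a list \<Rightarrow> 'x" where
  "deltaw d x [] = x"
| "deltaw d x (a # w) = deltaw d (d x a) w"

definition hatdelta1 :: "('x \<Rightarrow> 'a \<Rightarrow> 'x) \<Rightarrow> 'x set \<Rightarrow> 'a \<Rightarrow> 'x set" where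
  "hatdelta1 d U a = {x. d x a \<in> U}"

fun hatdelta :: "('x \<Rightarrow> 'a \<Rightarrow> 'x) \<Rightarrow> 'x set \<Rightarrow> 'a list \<Rightarrow> 'x set" where
  "hatdelta d U [] = U"
| "hatdelta d U (a # w) = hatdelta d (hatdelta1 d U a) w"

definition gen :: "('x \<Rightarrow> 'a \<Rightarrow> 'x) \<Rightarrow> 'x set \<Rightarrow> 'x set set" where
  "gen d c = {hatdelta d c w | w. True}"

definition approxrel :: "('x \<Rightarrow> 'a \<Rightarrow> 'x) \<Rightarrow> 'x set \<Rightarrow> ('a list \<times> 'a list) set" where
  "approxrel d c = {(u, v). \<forall>U \<in> gen d c. hatdelta d U u = hatdelta d U v}"

definition cls :: "('x \<Rightarrow> 'a \<Rightarrow> 'x) \<Rightarrow> 'x set \<Rightarrow> 'a list \<Rightarrow> 'a list set" where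
  "cls d c w = approxrel d c `` {w}"

text \<open>Sigma*/\<approx>; the state space of muPL is its powerset.\<close>
definition quot :: "('x \<Rightarrow> 'a \<Rightarrow> 'x) \<Rightarrow> 'x set \<Rightarrow> 'a list set set" where
  "quot d c = UNIV // approxrel d c"

definition hatsigma :: "('x \<Rightarrow> 'a \<Rightarrow> 'x) \<Rightarrow> 'x set \<Rightarrow> 'a list set set \<Rightarrow> 'a list \<Rightarrow> 'a list set set" where
  "hatsigma d c UU u = {cls d c w | w. cls d c (w @ rev u) \<in> UU}"

text \<open>Language of a state of muPL: final states are those containing [eps].\<close>
definition Lmu :: "('x \<Rightarrow> 'a \<Rightarrow> 'x) \<Rightarrow> 'x set \<Rightarrow> 'a list set set \<Rightarrow> 'a list set" where
  "Lmu d c UU = {u. cls d c [] \<in> hatsigma d c UU u}"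

definition Lx :: "('x \<Rightarrow> 'a \<Rightarrow> 'x) \<Rightarrow> 'x set \<Rightarrow> 'x \<Rightarrow> 'a list set" where
  "Lx d c x = {u. deltaw d x u \<in> c}"

definition lderiv :: "'a \<Rightarrow> 'a list set \<Rightarrow> 'a list set" where
  "lderiv a U = {w. a # w \<in> U}"

definition rderiv :: "'a \<Rightarrow> 'a list set \<Rightarrow> 'a list set" where
  "rderiv a U = {w. w @ [a] \<in> U}"

definition preformation :: "'a list set set \<Rightarrow> bool" where
  "preformation P \<longleftrightarrow>
     (\<forall>S. S \<subseteq> P \<longrightarrow> \<Union>S \<in> P) \<and>
     (\<forall>S. S \<subseteq> P \<longrightarrow> \<Inter>S \<in> P) \<and>
     (\<forall>A \<in> P. - A \<in> P) \<and>
     (\<forall>A \<in> P. A \<noteq> {} \<longrightarrow>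
        (\<exists>B \<in> P. B \<noteq> {} \<and> B \<subseteq> A \<and> (\<forall>C \<in> P. C \<subseteq> B \<longrightarrow> C = {} \<or> C = B))) \<and>
     (\<forall>a. \<forall>A \<in> P. lderiv a A \<in> P \<and> rderiv a A \<in> P)"

end

theory Submission
  imports Defs
begin

lemma deltaw_append: "deltaw d x (u @ v) = deltaw d (deltaw d x u) v"
  by (induction u arbitrary: x) auto

lemma hatdelta_eq: "hatdelta d U w = {x. deltaw d x (rev w) \<in> U}"
  by (induction w arbitrary: U) (auto simp: hatdelta1_def deltaw_append)

definition EE :: "('x \<Rightarrow> 'a \<Rightarrow> 'x) \<Rightarrow> 'x set \<Rightarrow> 'a list \<Rightarrow> 'a list \<Rightarrow> bool" where
  "EE d c u v = (\<forall>x w. deltaw d x (u @ w) \<in> c \<longleftrightarrow> deltaw d x (v @ w) \<in> c)"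

lemma approx_iff: "(u, v) \<in> approxrel d c \<longleftrightarrow> EE d c (rev u) (rev v)"
proof -
  have "(u, v) \<in> approxrel d c \<longleftrightarrow>
     (\<forall>w. {x. deltaw d x (rev u @ rev w) \<in> c} = {x. deltaw d x (rev v @ rev w) \<in> c})"
    by (auto simp: approxrel_def gen_def hatdelta_eq deltaw_append)
  also have "\<dots> \<longleftrightarrow> EE d c (rev u) (rev v)"
    unfolding EE_def
  proof (rule iffI; intro allI)
    fix x w assume H: "\<forall>w. {x. deltaw d x (rev u @ rev w) \<in> c} = {x. deltaw d x (rev v @ rev w) \<in> c}"
    from H[rule_format, of "rev w"]
    show "deltaw d x (rev u @ w) \<in> c \<longleftrightarrow> deltaw d x (rev v @ w) \<in> c" by (simp add: set_eq_iff)
  next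
    fix w assume H: "\<forall>x w. deltaw d x (rev u @ w) \<in> c \<longleftrightarrow> deltaw d x (rev v @ w) \<in> c"
    show "{x. deltaw d x (rev u @ rev w) \<in> c} = {x. deltaw d x (rev v @ rev w) \<in> c}"
      using H by auto
  qed
  finally show ?thesis .
qed

lemma EE_refl: "EE d c u u" by (simp add: EE_def)
lemma EE_sym: "EE d c u v \<Longrightarrow> EE d c v u" by (simp add: EE_def)
lemma EE_trans: "EE d c u v \<Longrightarrow> EE d c v w \<Longrightarrow> EE d c u w" by (simp add: EE_def)

lemma EE_left: "EE d c u v \<Longrightarrow> EE d c (z @ u) (z @ v)"
  unfolding EE_def by (metis append.assoc deltaw_append)

lemma EE_right: "EE d c u v \<Longrightarrow> EE d c (u @ z) (v @ z)"
  unfolding EE_def by (metis append.assoc)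

lemma equiv_R: "equiv UNIV (approxrel d c)"
  unfolding equiv_def refl_on_def sym_def trans_def
  by (auto simp: approx_iff intro: EE_refl EE_sym EE_trans)

lemma cls_eq: "cls d c u = cls d c v \<longleftrightarrow> EE d c (rev u) (rev v)"
  unfolding cls_def using equiv_R[of d c]
  by (simp add: eq_equiv_class_iff approx_iff)

lemma Lmu_eq: "Lmu d c UU = {u. cls d c (rev u) \<in> UU}"
proof -
  have "cls d c [] \<in> hatsigma d c UU u \<longleftrightarrow> cls d c (rev u) \<in> UU" for u
  proof
    assume "cls d c [] \<in> hatsigma d c UU u"
    then obtain w where w: "cls d c [] = cls d c w" "cls d c (w @ rev u) \<in> UU"
      by (auto simp: hatsigma_def)
    from w(1) have "EE d c (rev w) []" by (simp add: cls_eq EE_sym)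
    hence "EE d c (rev (w @ rev u)) (rev (rev u))" using EE_left[of d c "rev w" "[]" u] by simp
    hence "cls d c (w @ rev u) = cls d c (rev u)" by (simp add: cls_eq)
    with w(2) show "cls d c (rev u) \<in> UU" by simp
  next
    assume "cls d c (rev u) \<in> UU"
    thus "cls d c [] \<in> hatsigma d c UU u" by (auto simp: hatsigma_def)
  qed
  thus ?thesis by (auto simp: Lmu_def)
qed

definition sat :: "('x \<Rightarrow> 'a \<Rightarrow> 'x) \<Rightarrow> 'x set \<Rightarrow> 'a list set \<Rightarrow> bool" where
  "sat d c S = (\<forall>u v. EE d c u v \<longrightarrow> u \<in> S \<longrightarrow> v \<in> S)"

lemma image_eq: "Lmu d c ` Pow (quot d c) = {S. sat d c S}"
proof
  show "Lmu d c ` Pow (quot d c) \<subseteq> {S. sat d c S}"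
    by (auto simp: Lmu_eq sat_def) (metis cls_eq rev_rev_ident)
next
  show "{S. sat d c S} \<subseteq> Lmu d c ` Pow (quot d c)"
  proof
    fix S assume "S \<in> {S. sat d c S}"
    hence S: "sat d c S" by simp
    let ?UU = "{cls d c (rev u) | u. u \<in> S}"
    have "?UU \<subseteq> quot d c" by (auto simp: quot_def cls_def quotientI)
    moreover have "Lmu d c ?UU = S"
      using S by (auto simp: Lmu_eq sat_def cls_eq) (metis EE_sym EE_refl)+
    ultimately show "S \<in> Lmu d c ` Pow (quot d c)" by blast
  qed
qed

lemma inj: "inj_on (Lmu d c) (Pow (quot d c))"
proof (rule inj_onI)
  fix U1 U2 assume U: "U1 \<in> Pow (quot d c)" "U2 \<in> Pow (quot d c)" "Lmu d c U1 = Lmu d c U2"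
  have *: "K \<in> U2" if "K \<in> U1" "U1 \<subseteq> quot d c" "Lmu d c U1 = Lmu d c U2" for K U1 U2
  proof -
    from that obtain w where "K = cls d c w"
      by (auto simp: quot_def cls_def elim!: quotientE)
    hence "rev w \<in> {u. cls d c (rev u) \<in> U1}" using that by simp
    hence "rev w \<in> {u. cls d c (rev u) \<in> U2}" using that(3) Lmu_eq by metis
    thus ?thesis using \<open>K = cls d c w\<close> by simp
  qed
  show "U1 = U2" using *[of _ U1 U2] *[of _ U2 U1] U by auto
qed

lemma Q_in:
  assumes "preformation P" "A \<in> P"
  shows "{v. v @ w \<in> A} \<in> P"
  using assms(2)
proof (induction w arbitrary: A rule: rev_induct)
  case Nil thus ?case by simp
next
  case (snoc a w)
  have "rderiv a A \<in> P" using assms(1) snoc.prems by (simp add: preformation_def)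
  hence "{v. v @ w \<in> rderiv a A} \<in> P" by (rule snoc.IH)
  moreover have "{v. v @ w \<in> rderiv a A} = {v. v @ w @ [a] \<in> A}" by (simp add: rderiv_def)
  ultimately show ?case by simp
qed

theorem mainTheorem8:
  fixes d :: "'x \<Rightarrow> 'a::finite \<Rightarrow> 'x" and c :: "'x set"
  shows "inj_on (Lmu d c) (Pow (quot d c)) \<and>
         preformation (Lmu d c ` Pow (quot d c)) \<and>
         range (Lx d c) \<subseteq> Lmu d c ` Pow (quot d c) \<and>
         (\<forall>P. preformation P \<and> range (Lx d c) \<subseteq> P \<longrightarrow> Lmu d c ` Pow (quot d c) \<subseteq> P)"
proof (intro conjI allI impI)
  show "inj_on (Lmu d c) (Pow (quot d c))" by (rule inj)
next
  show "preformation (Lmu d c ` Pow (quot d c))"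
    unfolding image_eq preformation_def
  proof (intro conjI allI ballI impI)
    fix S :: "'a list set set" assume "S \<subseteq> {S. sat d c S}"
    thus "\<Union>S \<in> {S. sat d c S}" "\<Inter>S \<in> {S. sat d c S}" by (auto simp: sat_def)
  next
    fix A assume "A \<in> {S. sat d c S}"
    thus "- A \<in> {S. sat d c S}" by (auto simp: sat_def dest: EE_sym)
  next
    fix a A assume "A \<in> {S. sat d c S}"
    thus "lderiv a A \<in> {S. sat d c S}" "rderiv a A \<in> {S. sat d c S}"
      by (auto simp: sat_def lderiv_def rderiv_def dest: EE_left[of _ _ _ _ "[a]"] EE_right)
  next
    fix A assume A: "A \<in> {S. sat d c S}" "A \<noteq> {}"
    then obtain u where u: "u \<in> A" by auto
    let ?B = "{v. EE d c u v}"
    show "\<exists>B\<in>{S. sat d c S}. B \<noteq> {} \<and> B \<subseteq> A \<and> (\<forall>C\<in>{S. sat d c S}. C \<subseteq> B \<longrightarrow> C = {} \<or> C = B)"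
    proof (intro bexI conjI ballI impI)
      show "?B \<in> {S. sat d c S}" by (auto simp: sat_def intro: EE_trans)
      show "?B \<noteq> {}" using EE_refl by blast
      show "?B \<subseteq> A" using A u by (auto simp: sat_def)
      fix C assume C: "C \<in> {S. sat d c S}" "C \<subseteq> ?B"
      show "C = {} \<or> C = ?B"
      proof (cases "C = {}")
        case False
        then obtain v where v: "v \<in> C" by auto
        have "?B \<subseteq> C"
        proof
          fix v' assume "v' \<in> ?B"
          moreover have "EE d c u v" using C v by auto
          ultimately have "EE d c v v'" by (auto intro: EE_trans EE_sym)
          thus "v' \<in> C" using C v by (auto simp: sat_def)
        qed
        thus ?thesis using C by auto
      qed simp
    qed
  qed
next
  show "range (Lx d c) \<subseteq> Lmu d c ` Pow (quot d c)"
    unfolding image_eq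
  proof (clarsimp simp: sat_def)
    fix x u v assume "EE d c u v" "u \<in> Lx d c x"
    thus "v \<in> Lx d c x" unfolding EE_def Lx_def by (metis append_Nil2 mem_Collect_eq)
  qed
next
  fix P assume P: "preformation P \<and> range (Lx d c) \<subseteq> P"
  show "Lmu d c ` Pow (quot d c) \<subseteq> P"
    unfolding image_eq
  proof
    fix S assume "S \<in> {S. sat d c S}"
    hence S: "sat d c S" by simp
    define f where "f u = (\<lambda>(x, w). if u @ w \<in> Lx d c x then {v. v @ w \<in> Lx d c x}
                                      else - {v. v @ w \<in> Lx d c x})" for u
    have fP: "f u xw \<in> P" for u xw
    proof -
      obtain x w where xw: "xw = (x, w)" by fastforce
      have "{v. v @ w \<in> Lx d c x} \<in> P" using P Q_in by blast
      thus ?thesis using P unfolding f_def xw preformation_def by auto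
    qed
    have fm: "v \<in> f u (x, w) \<longleftrightarrow> (u @ w \<in> Lx d c x \<longleftrightarrow> v @ w \<in> Lx d c x)" for u v x w
      by (simp add: f_def)
    have EL: "EE d c u v \<longleftrightarrow> (\<forall>x w. u @ w \<in> Lx d c x \<longleftrightarrow> v @ w \<in> Lx d c x)" for u v
      by (simp add: EE_def Lx_def)
    have B: "{v. EE d c u v} = \<Inter> (range (f u))" for u
    proof (rule set_eqI)
      fix v
      have "v \<in> \<Inter> (range (f u)) \<longleftrightarrow> (\<forall>x w. v \<in> f u (x, w))" by auto
      thus "v \<in> {v. EE d c u v} \<longleftrightarrow> v \<in> \<Inter> (range (f u))" by (simp only: fm EL mem_Collect_eq)
    qed
    have IP: "\<forall>S. S \<subseteq> P \<longrightarrow> \<Inter>S \<in> P" and UP: "\<forall>S. S \<subseteq> P \<longrightarrow> \<Union>S \<in> P"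
      using P unfolding preformation_def by simp_all
    have "range (f u) \<subseteq> P" for u using fP by auto
    hence "\<Inter> (range (f u)) \<in> P" for u using IP by simp
    hence BP: "{v. EE d c u v} \<in> P" for u using B by simp
    have SU: "S = \<Union> ((\<lambda>u. {v. EE d c u v}) ` S)"
      using S by (auto simp: sat_def intro: EE_refl)
    have "(\<lambda>u. {v. EE d c u v}) ` S \<subseteq> P" using BP by auto
    hence "\<Union> ((\<lambda>u. {v. EE d c u v}) ` S) \<in> P" using UP by simp
    thus "S \<in> P" using SU by simp
  qed
qed

end
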